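(* Let $G=(V,E)$ be a finite simple connected graph with $n=|V|$ vertices and graph distance $d$, and let $\omega\colon V\to(0,\infty)$ be a weight function with total weight $\omega=\omega(V)$. Let $\delta>0$ and $s=\frac{8\ln n}{\delta^2}$. Let $S=\{m_1,\dots,m_s\}$ be a random sample (multiset) of $s$ vertices, drawn independently with $\Pr(m_i=v)=\omega(v)/\omega$, and let $\Phi^{*}(v)=\sum_{u\in S}d(u,v)$ (sum over the multiset, with multiplicity). Let $q$ be a vertex such that for each neighbor $v\in N(q)$ it holds $\Phi^{*}(q)\le \Phi^{*}(v)+\delta s$. Then, with probability at least $1-n^{-3}$, the vertex $q$ is $\delta$-close to a median, i.e. $\Lambda(q)\le\left(\frac12+\delta\right)\omega$.
   Context: For a vertex $q$ and a vertex $v$, a vertex $u$ is consistent with the pair $(q,v)$ if $q=v=u$, or $q\neq v$ and $v$ lies on a shortest path between $u$ and $q$; $N(q,v)$ denotes the set of all vertices consistent with $(q,v)$. $N(q)$ is the set of neighbors of $q$. For $X\subseteq V$, $\omega(X)=\sum_{u\in X}\omega(u)$. Define $\Lambda(v)=\max_{u\in N(v)}\omega(N(v,u))$. A vertex $q$ is $\delta$-close to a median if $\Lambda(q)\le(\frac12+\delta)\omega(V)$. *)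

theory Defs
  imports "HOL-Probability.Probability"
begin

definition simple_graph :: "'a set \<Rightarrow> ('a \<Rightarrow> 'a \<Rightarrow> bool) \<Rightarrow> bool" where
  "simple_graph V E \<longleftrightarrow> finite V \<and> (\<forall>u v. E u v \<longrightarrow> u \<in> V \<and> v \<in> V)
     \<and> (\<forall>u v. E u v \<longrightarrow> E v u) \<and> (\<forall>u. \<not> E u u)"

definition walk :: "('a \<Rightarrow> 'a \<Rightarrow> bool) \<Rightarrow> 'a list \<Rightarrow> bool" where
  "walk E xs \<longleftrightarrow> xs \<noteq> [] \<and> (\<forall>i. Suc i < length xs \<longrightarrow> E (xs ! i) (xs ! Suc i))"

definition walk_betw :: "('a \<Rightarrow> 'a \<Rightarrow> bool) \<Rightarrow> 'a \<Rightarrow> 'a list \<Rightarrow> 'a \<Rightarrow> bool" where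
  "walk_betw E u xs v \<longleftrightarrow> walk E xs \<and> hd xs = u \<and> last xs = v"

definition connected_graph :: "'a set \<Rightarrow> ('a \<Rightarrow> 'a \<Rightarrow> bool) \<Rightarrow> bool" where
  "connected_graph V E \<longleftrightarrow> V \<noteq> {} \<and> (\<forall>u\<in>V. \<forall>v\<in>V. \<exists>xs. walk_betw E u xs v)"

definition gdist :: "('a \<Rightarrow> 'a \<Rightarrow> bool) \<Rightarrow> 'a \<Rightarrow> 'a \<Rightarrow> nat" where
  "gdist E u v = (LEAST k. \<exists>xs. walk_betw E u xs v \<and> length xs - 1 = k)"

definition on_shortest_path :: "('a \<Rightarrow> 'a \<Rightarrow> bool) \<Rightarrow> 'a \<Rightarrow> 'a \<Rightarrow> 'a \<Rightarrow> bool" where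
  "on_shortest_path E u q v \<longleftrightarrow>
     (\<exists>xs. walk_betw E u xs q \<and> length xs - 1 = gdist E u q \<and> v \<in> set xs)"

definition consistent_set :: "'a set \<Rightarrow> ('a \<Rightarrow> 'a \<Rightarrow> bool) \<Rightarrow> 'a \<Rightarrow> 'a \<Rightarrow> 'a set" where
  "consistent_set V E q v =
     {u \<in> V. (q = v \<and> v = u) \<or> (q \<noteq> v \<and> on_shortest_path E u q v)}"

definition nbrs :: "'a set \<Rightarrow> ('a \<Rightarrow> 'a \<Rightarrow> bool) \<Rightarrow> 'a \<Rightarrow> 'a set" where
  "nbrs V E q = {v \<in> V. E q v}"

definition wt :: "('a \<Rightarrow> real) \<Rightarrow> 'a set \<Rightarrow> real" where
  "wt \<omega> X = (\<Sum>u\<in>X. \<omega> u)"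

definition Lambda :: "'a set \<Rightarrow> ('a \<Rightarrow> 'a \<Rightarrow> bool) \<Rightarrow> ('a \<Rightarrow> real) \<Rightarrow> 'a \<Rightarrow> real" where
  "Lambda V E \<omega> v = Max ((\<lambda>u. wt \<omega> (consistent_set V E v u)) ` nbrs V E v)"

definition delta_close_to_median ::
  "'a set \<Rightarrow> ('a \<Rightarrow> 'a \<Rightarrow> bool) \<Rightarrow> ('a \<Rightarrow> real) \<Rightarrow> real \<Rightarrow> 'a \<Rightarrow> bool" where
  "delta_close_to_median V E \<omega> \<delta> q \<longleftrightarrow> Lambda V E \<omega> q \<le> (1/2 + \<delta>) * wt \<omega> V"

text \<open>Phi*(v) for a sample given as a list (multiset with multiplicity).\<close>

definition Phi_sample :: "('a \<Rightarrow> 'a \<Rightarrow> bool) \<Rightarrow> 'a list \<Rightarrow> 'a \<Rightarrow> real" where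
  "Phi_sample E S v = (\<Sum>u\<leftarrow>S. real (gdist E u v))"

end

theory Submission
  imports Defs
begin

lemma walk_snoc: "walk E xs \<Longrightarrow> E (last xs) v \<Longrightarrow> walk E (xs @ [v])"
  unfolding walk_def
proof (intro conjI allI impI)
  fix i assume h: "xs \<noteq> [] \<and> (\<forall>i. Suc i < length xs \<longrightarrow> E (xs ! i) (xs ! Suc i))"
    "E (last xs) v" "Suc i < length (xs @ [v])"
  show "E ((xs @ [v]) ! i) ((xs @ [v]) ! Suc i)"
  proof (cases "Suc i < length xs")
    case True then show ?thesis using h by (simp add: nth_append)
  next
    case False
    hence "i = length xs - 1" using h by simp
    then show ?thesis using h by (simp add: nth_append last_conv_nth)
  qed
qed simp

lemma walk_take: "walk E xs \<Longrightarrow> 0 < k \<Longrightarrow> walk E (take k xs)"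
  unfolding walk_def by auto

lemma gdist_le: "walk_betw E u xs v \<Longrightarrow> gdist E u v \<le> length xs - 1"
  unfolding gdist_def by (rule Least_le) blast

lemma gdist_ex: "walk_betw E u xs v \<Longrightarrow> \<exists>ys. walk_betw E u ys v \<and> length ys - 1 = gdist E u v"
  unfolding gdist_def by (rule LeastI_ex) blast

lemma gdist_nbr:
  assumes "walk_betw E u xs q" "E q v"
  shows "gdist E u v \<le> gdist E u q + 1"
proof -
  obtain ys where ys: "walk_betw E u ys q" "length ys - 1 = gdist E u q"
    using gdist_ex[OF assms(1)] by blast
  have "walk_betw E u (ys @ [v]) v"
    using ys assms(2) walk_snoc[of E ys v] unfolding walk_betw_def by (auto simp: walk_def)
  from gdist_le[OF this] have "gdist E u v \<le> length ys" by simp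
  moreover have "ys \<noteq> []" using ys unfolding walk_betw_def walk_def by auto
  ultimately show ?thesis using ys by simp
qed

lemma gdist_sp:
  assumes "on_shortest_path E u q v" "v \<noteq> q"
  shows "gdist E u v + 1 \<le> gdist E u q"
proof -
  obtain xs where xs: "walk_betw E u xs q" "length xs - 1 = gdist E u q" "v \<in> set xs"
    using assms(1) unfolding on_shortest_path_def by blast
  obtain i where i: "i < length xs" "xs ! i = v" using xs(3) by (meson in_set_conv_nth)
  have ne: "xs \<noteq> []" using xs unfolding walk_betw_def walk_def by auto
  have "last xs = q" using xs unfolding walk_betw_def by auto
  hence "i \<noteq> length xs - 1" using i assms(2) ne by (auto simp: last_conv_nth)
  hence ilt: "i < length xs - 1" using i by simp
  have "last (take (Suc i) xs) = v" using i by (simp add: take_Suc_conv_app_nth)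
  moreover have "hd (take (Suc i) xs) = u" using xs(1) unfolding walk_betw_def by simp
  moreover have "walk E (take (Suc i) xs)" using xs(1) walk_take unfolding walk_betw_def by blast
  ultimately have "walk_betw E u (take (Suc i) xs) v" unfolding walk_betw_def by blast
  from gdist_le[OF this] have "gdist E u v \<le> i" using i by simp
  thus ?thesis using ilt xs(2) by simp
qed

lemma replicate_pmf_map: "replicate_pmf n (map_pmf f P) = map_pmf (map f) (replicate_pmf n P)"
  by (induction n) (simp_all add: map_pmf_def bind_assoc_pmf bind_return_pmf)

lemma map_bernoulli: "map_pmf (\<lambda>x. x \<in> N) P = bernoulli_pmf (measure_pmf.prob P N)"
proof (rule pmf_eqI)
  fix b :: bool
  show "pmf (map_pmf (\<lambda>x. x \<in> N) P) b = pmf (bernoulli_pmf (measure_pmf.prob P N)) b"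
  proof (cases b)
    case True
    then show ?thesis by (simp add: pmf_map vimage_def)
  next
    case False
    have "(\<lambda>x. x \<in> N) -` {False} = UNIV - N" by auto
    moreover have "measure_pmf.prob P (UNIV - N) = 1 - measure_pmf.prob P N"
      by (metis measure_pmf.prob_compl sets_measure_pmf space_measure_pmf UNIV_I)
    ultimately show ?thesis using False by (simp add: pmf_map)
  qed
qed

lemma count_binomial:
  "map_pmf (\<lambda>S. length (filter (\<lambda>u. u \<in> N) S)) (replicate_pmf s P)
     = binomial_pmf s (measure_pmf.prob P N)"
proof -
  have "binomial_pmf s (measure_pmf.prob P N) =
     map_pmf (length \<circ> filter id) (replicate_pmf s (map_pmf (\<lambda>x. x \<in> N) P))"
    by (subst binomial_pmf_altdef) (simp_all add: map_bernoulli measure_pmf.prob_le_1)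
  also have "\<dots> = map_pmf (\<lambda>S. length (filter (\<lambda>u. u \<in> N) S)) (replicate_pmf s P)"
    by (simp add: replicate_pmf_map pmf.map_comp o_def filter_map)
  finally show ?thesis by simp
qed

lemma Phi_diff:
  assumes "\<forall>u\<in>set S. real (gdist E u v) - real (gdist E u q) \<le> (if u \<in> N then -1 else 1)"
  shows "Phi_sample E S v - Phi_sample E S q \<le> real (length S) - 2 * real (length (filter (\<lambda>u. u \<in> N) S))"
  using assms by (induction S) (auto simp: Phi_sample_def)



lemma tail_bound:
  fixes P :: "'a pmf" and N :: "'a set" and s :: nat and \<delta> :: real and n :: real
  assumes p: "measure_pmf.prob P N > 1/2 + \<delta>" and d: "\<delta> > 0" and s: "s > 0"
    and n: "n > 0" and hs: "real s \<ge> 8 * ln n / \<delta>\<^sup>2"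
  shows "measure_pmf.prob (replicate_pmf s P)
           {S. real (length (filter (\<lambda>u. u \<in> N) S)) \<le> (1 + \<delta>) * real s / 2} \<le> n powr (-4)"
proof -
  define p where "p = measure_pmf.prob P N"
  define \<epsilon> where "\<epsilon> = real s * p - (1 + \<delta>) * real s / 2"
  have e1: "\<epsilon> \<ge> \<delta> * real s / 2"
  proof -
    have "real s * (p - 1/2 - \<delta>/2) \<ge> real s * (\<delta>/2)"
      using p s unfolding p_def by (intro mult_left_mono) auto
    thus "\<epsilon> \<ge> \<delta> * real s / 2" unfolding \<epsilon>_def by (simp add: algebra_simps add_divide_distrib)
  qed
  have "0 \<le> \<delta> * real s / 2" using d by simp
  hence e0: "\<epsilon> \<ge> 0" using e1 by linarith
  have bd: "binomial_distribution p"
    unfolding binomial_distribution_def p_def by (simp add: measure_pmf.prob_le_1)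
  have "measure_pmf.prob (replicate_pmf s P)
           {S. real (length (filter (\<lambda>u. u \<in> N) S)) \<le> (1 + \<delta>) * real s / 2}
      = measure_pmf.prob (map_pmf (\<lambda>S. length (filter (\<lambda>u. u \<in> N) S)) (replicate_pmf s P))
           {x. real x \<le> real s * p - \<epsilon>}"
    by (simp add: measure_map_pmf \<epsilon>_def vimage_def)
  also have "\<dots> = measure_pmf.prob (binomial_pmf s p) {x. real x \<le> real s * p - \<epsilon>}"
    by (simp add: count_binomial p_def)
  also have "\<dots> \<le> exp (- 2 * \<epsilon>\<^sup>2 / real s)"
    by (rule binomial_distribution.prob_le[OF bd s e0])
  also have "\<dots> \<le> exp (- (\<delta>\<^sup>2 * real s / 2))"
  proof -
    have "(\<delta> * real s / 2)\<^sup>2 \<le> \<epsilon>\<^sup>2" using e1 \<open>0 \<le> \<delta> * real s / 2\<close> by (rule power_mono)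
    hence "2 * (\<delta> * real s / 2)\<^sup>2 / real s \<le> 2 * \<epsilon>\<^sup>2 / real s"
      using s by (intro divide_right_mono mult_left_mono) auto
    moreover have "2 * (\<delta> * real s / 2)\<^sup>2 / real s = \<delta>\<^sup>2 * real s / 2"
      using s by (simp add: power2_eq_square field_simps)
    ultimately show ?thesis by simp
  qed
  also have "\<dots> \<le> exp (- 4 * ln n)"
  proof -
    have "8 * ln n \<le> real s * \<delta>\<^sup>2" using hs d by (simp add: divide_le_eq)
    thus ?thesis by (simp add: algebra_simps)
  qed
  also have "\<dots> = n powr (-4)" using n by (simp add: powr_def)
  finally show ?thesis .
qed

theorem theorem4:
  fixes V :: "'a set" and E :: "'a \<Rightarrow> 'a \<Rightarrow> bool" and \<omega> :: "'a \<Rightarrow> real"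
    and \<delta> :: real and P :: "'a pmf" and s :: nat
  assumes G: "simple_graph V E" and conn: "connected_graph V E"
    and wpos: "\<forall>v\<in>V. \<omega> v > 0"
    and dpos: "\<delta> > 0"
    and s_def: "s = nat \<lceil>8 * ln (real (card V)) / \<delta>\<^sup>2\<rceil>"
    and P_def: "\<forall>v\<in>V. pmf P v = \<omega> v / wt \<omega> V"
  shows "measure_pmf.prob (replicate_pmf s P)
           {S. \<forall>q\<in>V. (\<forall>v\<in>nbrs V E q. Phi_sample E S q \<le> Phi_sample E S v + \<delta> * real s)
                 \<longrightarrow> delta_close_to_median V E \<omega> \<delta> q}
         \<ge> 1 - real (card V) powr (-3)"
proof -
  define A where "A = {S. \<forall>q\<in>V. (\<forall>v\<in>nbrs V E q. Phi_sample E S q \<le> Phi_sample E S v + \<delta> * real s)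
                 \<longrightarrow> delta_close_to_median V E \<omega> \<delta> q}"
  define n where "n = card V"
  define W where "W = wt \<omega> V"
  define R where "R = replicate_pmf s P"
  have finV: "finite V" using G unfolding simple_graph_def by auto
  have Vne: "V \<noteq> {}" using conn unfolding connected_graph_def by auto
  have n1: "n \<ge> 1" using finV Vne unfolding n_def by (simp add: Suc_le_eq card_gt_0_iff)
  have Wpos: "W > 0" unfolding W_def wt_def using finV Vne wpos by (intro sum_pos) auto
  show ?thesis
  proof (cases "n = 1")
    case True
    then show ?thesis unfolding n_def[symmetric] by simp
  next
    case False
    hence n2: "n \<ge> 2" using n1 by simp
    have lnpos: "ln (real n) > 0" using n2 by simp
    have hs: "real s \<ge> 8 * ln (real n) / \<delta>\<^sup>2"
      unfolding s_def n_def by (rule real_nat_ceiling_ge)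
    have "8 * ln (real n) / \<delta>\<^sup>2 > 0" using lnpos dpos by simp
    hence spos: "s > 0" using hs by linarith
    have "measure_pmf.prob P V = 1"
    proof -
      have "measure_pmf.prob P V = (\<Sum>v\<in>V. \<omega> v / W)"
        using finV P_def unfolding W_def by (simp add: measure_measure_pmf_finite)
      also have "\<dots> = W / W" unfolding W_def wt_def by (simp only: sum_divide_distrib[symmetric])
      finally show ?thesis using Wpos by simp
    qed
    hence PV: "set_pmf P \<subseteq> V"
      by (metis measure_pmf.prob_eq_1 sets_measure_pmf UNIV_I set_pmf_eq' subsetI AE_measure_pmf_iff)
    have sym: "\<And>u v. E u v \<Longrightarrow> E v u" and irr: "\<And>u. \<not> E u u"
      and inV: "\<And>u v. E u v \<Longrightarrow> u \<in> V \<and> v \<in> V"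
      using G unfolding simple_graph_def by blast+
    have walks: "\<And>u v. u \<in> V \<Longrightarrow> v \<in> V \<Longrightarrow> \<exists>xs. walk_betw E u xs v"
      using conn unfolding connected_graph_def by blast
    have nbne: "nbrs V E q \<noteq> {}" if q: "q \<in> V" for q
    proof -
      have "\<not> V \<subseteq> {q}"
      proof
        assume "V \<subseteq> {q}"
        hence "card V \<le> card {q}" by (intro card_mono) auto
        thus False using n2 unfolding n_def by simp
      qed
      then obtain w where w: "w \<in> V" "w \<noteq> q" by blast
      obtain xs where xs: "walk_betw E q xs w" using walks q w by blast
      have ne: "xs \<noteq> []" and hd: "hd xs = q" and la: "last xs = w"
        and wk: "\<forall>i. Suc i < length xs \<longrightarrow> E (xs ! i) (xs ! Suc i)"
        using xs unfolding walk_betw_def walk_def by auto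
      have "length xs \<noteq> 1"
      proof
        assume "length xs = 1"
        hence "hd xs = last xs" using ne by (simp add: hd_conv_nth last_conv_nth)
        thus False using hd la w by simp
      qed
      hence "Suc 0 < length xs" using ne by (cases xs) auto
      hence "E (xs ! 0) (xs ! 1)" using wk by auto
      moreover have "xs ! 0 = q" using hd ne by (simp add: hd_conv_nth)
      ultimately have "xs ! 1 \<in> nbrs V E q" unfolding nbrs_def using inV by auto
      thus ?thesis by blast
    qed
    define Bad where "Bad = {q\<in>V. \<not> delta_close_to_median V E \<omega> \<delta> q}"
    have "\<forall>q\<in>Bad. \<exists>v. v \<in> nbrs V E q \<and> wt \<omega> (consistent_set V E q v) > (1/2 + \<delta>) * W"
    proof
      fix q assume q: "q \<in> Bad"
      have fin: "finite (nbrs V E q)" using finV unfolding nbrs_def by simp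
      have "Lambda V E \<omega> q \<in> (\<lambda>u. wt \<omega> (consistent_set V E q u)) ` nbrs V E q"
        unfolding Lambda_def using fin nbne[of q] q unfolding Bad_def by (intro Max_in) auto
      then obtain v where "v \<in> nbrs V E q" "Lambda V E \<omega> q = wt \<omega> (consistent_set V E q v)" by blast
      moreover have "Lambda V E \<omega> q > (1/2 + \<delta>) * W"
        using q unfolding Bad_def delta_close_to_median_def W_def by auto
      ultimately show "\<exists>v. v \<in> nbrs V E q \<and> wt \<omega> (consistent_set V E q v) > (1/2 + \<delta>) * W"
        by auto
    qed
    then obtain f where f: "\<And>q. q \<in> Bad \<Longrightarrow> f q \<in> nbrs V E q \<and>
        wt \<omega> (consistent_set V E q (f q)) > (1/2 + \<delta>) * W" by metis
    define N where "N q = consistent_set V E q (f q)" for q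
    define B where "B q = {S. real (length (filter (\<lambda>u. u \<in> N q) S)) \<le> (1 + \<delta>) * real s / 2}" for q
    have sub: "set_pmf R \<inter> (UNIV - A) \<subseteq> (\<Union>q\<in>Bad. B q)"
    proof
      fix S assume S: "S \<in> set_pmf R \<inter> (UNIV - A)"
      hence SV: "set S \<subseteq> V" and Sl: "length S = s"
        using PV unfolding R_def by (auto simp: set_replicate_pmf)
      from S obtain q where q: "q \<in> V" 
        and cond: "\<forall>v\<in>nbrs V E q. Phi_sample E S q \<le> Phi_sample E S v + \<delta> * real s"
        and nc: "\<not> delta_close_to_median V E \<omega> \<delta> q" unfolding A_def by blast
      have qB: "q \<in> Bad" unfolding Bad_def using q nc by blast
      define v where "v = f q"
      have v: "v \<in> nbrs V E q" using f[OF qB] unfolding v_def by blast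
      hence Eqv: "E q v" and vq: "v \<noteq> q" using irr unfolding nbrs_def by auto
      have "\<forall>u\<in>set S. real (gdist E u v) - real (gdist E u q) \<le> (if u \<in> N q then -1 else 1)"
      proof
        fix u assume "u \<in> set S"
        hence u: "u \<in> V" using SV by blast
        obtain xs where "walk_betw E u xs q" using walks u q by blast
        from gdist_nbr[OF this Eqv] have g1: "gdist E u v \<le> gdist E u q + 1" .
        show "real (gdist E u v) - real (gdist E u q) \<le> (if u \<in> N q then -1 else 1)"
        proof (cases "u \<in> N q")
          case True
          hence "on_shortest_path E u q v" using vq unfolding N_def v_def consistent_set_def by auto
          from gdist_sp[OF this vq] True show ?thesis by simp
        next
          case False
          then show ?thesis using g1 by simp
        qed
      qed
      from Phi_diff[OF this] Sl have d1: "Phi_sample E S v - Phi_sample E S q \<le> real s - 2 * real (length (filter (\<lambda>u. u \<in> N q) S))" by simp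
      have d2: "Phi_sample E S q \<le> Phi_sample E S v + \<delta> * real s" using cond v by blast
      have d3: "(1 + \<delta>) * real s / 2 = real s / 2 + \<delta> * real s / 2" by (simp add: algebra_simps add_divide_distrib)
      have "real (length (filter (\<lambda>u. u \<in> N q) S)) \<le> (1 + \<delta>) * real s / 2"
        unfolding d3 using d1 d2 by linarith
      thus "S \<in> (\<Union>q\<in>Bad. B q)" using qB unfolding B_def by blast
    qed
    have pb: "measure_pmf.prob R (B q) \<le> real n powr (-4)" if q: "q \<in> Bad" for q
    proof -
      have NV: "N q \<subseteq> V" unfolding N_def consistent_set_def by auto
      hence finN: "finite (N q)" using finV by (rule finite_subset)
      have "measure_pmf.prob P (N q) = (\<Sum>u\<in>N q. \<omega> u / W)"
        using finN NV P_def unfolding W_def by (auto simp: measure_measure_pmf_finite intro!: sum.cong)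
      also have "\<dots> = wt \<omega> (N q) / W" unfolding wt_def by (simp only: sum_divide_distrib[symmetric])
      finally have "measure_pmf.prob P (N q) = wt \<omega> (N q) / W" .
      moreover have "wt \<omega> (N q) > (1/2 + \<delta>) * W" using f[OF q] unfolding N_def by blast
      ultimately have "measure_pmf.prob P (N q) > 1/2 + \<delta>" using Wpos by (simp add: pos_less_divide_eq)
      from tail_bound[OF this dpos spos _ hs] n1 show ?thesis unfolding R_def B_def by simp
    qed
    have finB: "finite Bad" using finV unfolding Bad_def by simp
    have cB: "card Bad \<le> n" unfolding n_def Bad_def using finV by (intro card_mono) auto
    have "measure_pmf.prob R (UNIV - A) = measure_pmf.prob R ((UNIV - A) \<inter> set_pmf R)"
      by (simp add: measure_Int_set_pmf)
    also have "\<dots> \<le> measure_pmf.prob R (\<Union>q\<in>Bad. B q)"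
      using sub by (intro measure_pmf.finite_measure_mono) auto
    also have "\<dots> \<le> (\<Sum>q\<in>Bad. measure_pmf.prob R (B q))"
      using finB by (intro measure_pmf.finite_measure_subadditive_finite) auto
    also have "\<dots> \<le> (\<Sum>q\<in>Bad. real n powr (-4))" using pb by (intro sum_mono) auto
    also have "\<dots> = real (card Bad) * real n powr (-4)" by simp
    also have "\<dots> \<le> real n * real n powr (-4)" using cB by (intro mult_right_mono) auto
    also have "\<dots> = real n powr (-3)"
    proof -
      have "real n * real n powr (-4) = real n powr 1 * real n powr (-4)" using n1 by simp
      also have "\<dots> = real n powr (1 + -4)" by (rule powr_add[symmetric])
      also have "(1::real) + -4 = -3" by simp
      finally show ?thesis .
    qed
    finally have c: "measure_pmf.prob R (UNIV - A) \<le> real n powr (-3)" .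
    have "measure_pmf.prob R (UNIV - A) = 1 - measure_pmf.prob R A"
      by (metis measure_pmf.prob_compl sets_measure_pmf space_measure_pmf UNIV_I)
    with c show ?thesis unfolding R_def A_def n_def by simp
  qed
qed

end
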